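(* Let $(\mathfrak{A},\varphi,\tau)$ be a $*$-dynamical system and let $\mathfrak{S}$ and $\mathfrak{T}$ be $\varphi$-total sets in $\mathfrak{A}$. Then: (i) If $(\mathfrak{A},\varphi,\tau)$ is ergodic, then $\frac1n\sum_{k=0}^{n-1}\varphi\left(A\tau^k(B)\right)\to\varphi(A)\varphi(B)$ as $n\to\infty$ for all $A,B\in\mathfrak{A}$. (ii) If $\frac1n\sum_{k=0}^{n-1}\varphi\left(A\tau^k(B)\right)\to\varphi(A)\varphi(B)$ as $n\to\infty$ for all $A\in\mathfrak{S}^*$ and $B\in\mathfrak{T}$, then $(\mathfrak{A},\varphi,\tau)$ is ergodic.
   Context: All algebras are over $\mathbb{C}$. A state on a unital $*$-algebra $\mathfrak{A}$ is a linear functional $\varphi$ with $\varphi(A^*A)\ge0$ for all $A$ and $\varphi(1)=1$. A $*$-dynamical system is a triple $(\mathfrak{A},\varphi,\tau)$ with $\mathfrak{A}$ a unital $*$-algebra, $\varphi$ a state, and $\tau:\mathfrak{A}\to\mathfrak{A}$ linear with $\tau(1)=1$ and $\varphi(\tau(A)^*\tau(A))\le\varphi(A^*A)$ for all $A$. Let $\|A\|_\varphi=\sqrt{\varphi(A^*A)}$ and identify $\alpha\in\mathbb{C}$ with $\alpha1$. The system is ergodic if for every sequence $(A_n)$ with $\|\tau(A_n)-A_n\|_\varphi\to0$ which is Cauchy for $\|\cdot\|_\varphi$ (for every $\varepsilon>0$ there is $N$ with $\|A_m-A_n\|_\varphi\le\varepsilon$ for $m,n>N$), there is $\alpha\in\mathbb{C}$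 with $\|A_n-\alpha\|_\varphi\to0$. A subset of $\mathfrak{A}$ is $\varphi$-total if its linear span is dense in the seminormed space $(\mathfrak{A},\|\cdot\|_\varphi)$. For $\mathfrak{S}\subseteq\mathfrak{A}$, $\mathfrak{S}^*=\{A^*:A\in\mathfrak{S}\}$. *)

theory Defs
  imports Complex_Main
begin

text \<open>A unital complex *-algebra is modelled on a type 'a of class ring_1
 (unital associative ring), together with a complex scalar multiplication
 smul and an involution st (the star operation).\<close>

definition star_algebra :: "(complex \<Rightarrow> 'a::ring_1 \<Rightarrow> 'a) \<Rightarrow> ('a \<Rightarrow> 'a) \<Rightarrow> bool" where
  "star_algebra smul st \<longleftrightarrow>
     (\<forall>a b x. smul a (x + b) = smul a x + smul a b) \<and>
     (\<forall>a b x. smul (a + b) x = smul a x + smul b x) \<and>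
     (\<forall>a b x. smul a (smul b x) = smul (a * b) x) \<and>
     (\<forall>x. smul 1 x = x) \<and>
     (\<forall>a x y. smul a (x * y) = smul a x * y) \<and>
     (\<forall>a x y. smul a (x * y) = x * smul a y) \<and>
     (\<forall>x. st (st x) = x) \<and>
     (\<forall>x y. st (x + y) = st x + st y) \<and>
     (\<forall>a x. st (smul a x) = smul (cnj a) (st x)) \<and>
     (\<forall>x y. st (x * y) = st y * st x)"

definition is_state :: "(complex \<Rightarrow> 'a::ring_1 \<Rightarrow> 'a) \<Rightarrow> ('a \<Rightarrow> 'a) \<Rightarrow> ('a \<Rightarrow> complex) \<Rightarrow> bool" where
  "is_state smul st \<phi> \<longleftrightarrow>
     (\<forall>x y. \<phi> (x + y) = \<phi> x + \<phi> y) \<and>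
     (\<forall>a x. \<phi> (smul a x) = a * \<phi> x) \<and>
     (\<forall>x. Im (\<phi> (st x * x)) = 0 \<and> Re (\<phi> (st x * x)) \<ge> 0) \<and>
     \<phi> 1 = 1"

definition phinorm :: "('a::ring_1 \<Rightarrow> 'a) \<Rightarrow> ('a \<Rightarrow> complex) \<Rightarrow> 'a \<Rightarrow> real" where
  "phinorm st \<phi> A = sqrt (Re (\<phi> (st A * A)))"

definition star_dynamical_system ::
  "(complex \<Rightarrow> 'a::ring_1 \<Rightarrow> 'a) \<Rightarrow> ('a \<Rightarrow> 'a) \<Rightarrow> ('a \<Rightarrow> complex) \<Rightarrow> ('a \<Rightarrow> 'a) \<Rightarrow> bool" where
  "star_dynamical_system smul st \<phi> \<tau> \<longleftrightarrow>
     star_algebra smul st \<and> is_state smul st \<phi> \<and>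
     (\<forall>x y. \<tau> (x + y) = \<tau> x + \<tau> y) \<and>
     (\<forall>a x. \<tau> (smul a x) = smul a (\<tau> x)) \<and>
     \<tau> 1 = 1 \<and>
     (\<forall>A. Re (\<phi> (st (\<tau> A) * \<tau> A)) \<le> Re (\<phi> (st A * A)))"

definition phi_cauchy :: "('a::ring_1 \<Rightarrow> 'a) \<Rightarrow> ('a \<Rightarrow> complex) \<Rightarrow> (nat \<Rightarrow> 'a) \<Rightarrow> bool" where
  "phi_cauchy st \<phi> X \<longleftrightarrow>
     (\<forall>\<epsilon>>0. \<exists>N. \<forall>m n. m > N \<and> n > N \<longrightarrow> phinorm st \<phi> (X m - X n) \<le> \<epsilon>)"

definition ergodic ::
  "(complex \<Rightarrow> 'a::ring_1 \<Rightarrow> 'a) \<Rightarrow> ('a \<Rightarrow> 'a) \<Rightarrow> ('a \<Rightarrow> complex) \<Rightarrow> ('a \<Rightarrow> 'a) \<Rightarrow> bool" where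
  "ergodic smul st \<phi> \<tau> \<longleftrightarrow>
     (\<forall>X. (\<lambda>n. phinorm st \<phi> (\<tau> (X n) - X n)) \<longlonglongrightarrow> 0 \<and> phi_cauchy st \<phi> X \<longrightarrow>
        (\<exists>\<alpha>. (\<lambda>n. phinorm st \<phi> (X n - smul \<alpha> 1)) \<longlonglongrightarrow> 0))"

definition lin_span :: "(complex \<Rightarrow> 'a::ring_1 \<Rightarrow> 'a) \<Rightarrow> 'a set \<Rightarrow> 'a set" where
  "lin_span smul S = {B. \<exists>F c. finite F \<and> F \<subseteq> S \<and> B = (\<Sum>s\<in>F. smul (c s) s)}"

definition phi_total ::
  "(complex \<Rightarrow> 'a::ring_1 \<Rightarrow> 'a) \<Rightarrow> ('a \<Rightarrow> 'a) \<Rightarrow> ('a \<Rightarrow> complex) \<Rightarrow> 'a set \<Rightarrow> bool" where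
  "phi_total smul st \<phi> S \<longleftrightarrow>
     (\<forall>A. \<forall>\<epsilon>>0. \<exists>B\<in>lin_span smul S. phinorm st \<phi> (A - B) < \<epsilon>)"

end

theory Submission imports Defs begin

locale sds =
  fixes smul :: "complex \<Rightarrow> 'a::ring_1 \<Rightarrow> 'a"
    and st :: "'a \<Rightarrow> 'a" and \<phi> :: "'a \<Rightarrow> complex" and \<tau> :: "'a \<Rightarrow> 'a"
  assumes sds: "star_dynamical_system smul st \<phi> \<tau>"
begin

lemma sm_add_r: "smul a (x + y) = smul a x + smul a y"
  and sm_add_l: "smul (a + b) x = smul a x + smul b x"
  and sm_assoc: "smul a (smul b x) = smul (a * b) x"
  and sm_one: "smul 1 x = x"
  and sm_mult_l: "smul a (x * y) = smul a x * y"
  and sm_mult_r: "smul a (x * y) = x * smul a y"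
  and st_st: "st (st x) = x"
  and st_add: "st (x + y) = st x + st y"
  and st_sm: "st (smul a x) = smul (cnj a) (st x)"
  and st_mult: "st (x * y) = st y * st x"
  and phi_add: "\<phi> (x + y) = \<phi> x + \<phi> y"
  and phi_sm: "\<phi> (smul a x) = a * \<phi> x"
  and phi_pos_im: "Im (\<phi> (st x * x)) = 0"
  and phi_pos_re: "Re (\<phi> (st x * x)) \<ge> 0"
  and phi_one: "\<phi> 1 = 1"
  and tau_add: "\<tau> (x + y) = \<tau> x + \<tau> y"
  and tau_sm: "\<tau> (smul a x) = smul a (\<tau> x)"
  and tau_one: "\<tau> 1 = 1"
  and tau_contr: "Re (\<phi> (st (\<tau> x) * \<tau> x)) \<le> Re (\<phi> (st x * x))"
  using sds unfolding star_dynamical_system_def star_algebra_def is_state_def by auto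

lemma sm_zero_r[simp]: "smul a 0 = 0"
  using sm_add_r[of a 0 0] by simp
lemma sm_zero_l[simp]: "smul 0 x = 0"
  using sm_add_l[of 0 0 x] by simp
lemma sm_minus_r: "smul a (- x) = - smul a x"
  using sm_add_r[of a x "-x"] by (simp add: eq_neg_iff_add_eq_0 add.commute)
lemma sm_diff_r: "smul a (x - y) = smul a x - smul a y"
  using sm_add_r[of a x "-y"] sm_minus_r by simp
lemma sm_minus_l: "smul (- a) x = - smul a x"
  using sm_add_l[of a "-a" x] by (simp add: eq_neg_iff_add_eq_0 add.commute)
lemma sm_diff_l: "smul (a - b) x = smul a x - smul b x"
  using sm_add_l[of a "-b" x] sm_minus_l by simp
lemma sm_one_mult: "smul a 1 * x = smul a x"
  using sm_mult_l[of a 1 x] by simp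
lemma mult_sm_one: "x * smul a 1 = smul a x"
  using sm_mult_r[of a x 1] by simp

lemma st_zero[simp]: "st 0 = 0"
  using st_add[of 0 0] by simp
lemma st_minus: "st (- x) = - st x"
  using st_add[of x "-x"] by (simp add: eq_neg_iff_add_eq_0 add.commute)
lemma st_diff: "st (x - y) = st x - st y"
  using st_add[of x "-y"] st_minus by simp
lemma st_one[simp]: "st 1 = 1"
proof -
  have "st 1 * x = x" for x
    using st_mult[of "st x" 1] st_st by simp
  from this[of 1] show ?thesis by simp
qed

lemma phi_zero[simp]: "\<phi> 0 = 0"
  using phi_add[of 0 0] by simp
lemma phi_minus: "\<phi> (- x) = - \<phi> x"
  using phi_add[of x "-x"] by (simp add: eq_neg_iff_add_eq_0 add.commute)
lemma phi_diff: "\<phi> (x - y) = \<phi> x - \<phi> y"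
  using phi_add[of x "-y"] phi_minus by simp

lemma tau_zero[simp]: "\<tau> 0 = 0"
  using tau_add[of 0 0] by simp
lemma tau_minus: "\<tau> (- x) = - \<tau> x"
  using tau_add[of x "-x"] by (simp add: eq_neg_iff_add_eq_0 add.commute)
lemma tau_diff: "\<tau> (x - y) = \<tau> x - \<tau> y"
  using tau_add[of x "-y"] tau_minus by simp

lemma taup_add: "(\<tau>^^k) (x + y) = (\<tau>^^k) x + (\<tau>^^k) y"
  by (induct k) (auto simp: tau_add)
lemma taup_sm: "(\<tau>^^k) (smul a x) = smul a ((\<tau>^^k) x)"
  by (induct k) (auto simp: tau_sm)
lemma taup_one: "(\<tau>^^k) 1 = 1"
  by (induct k) (auto simp: tau_one)
lemma taup_diff: "(\<tau>^^k) (x - y) = (\<tau>^^k) x - (\<tau>^^k) y"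
  by (induct k) (auto simp: tau_diff)
lemma taup_zero: "(\<tau>^^k) 0 = 0"
  by (induct k) auto

definition ip :: "'a \<Rightarrow> 'a \<Rightarrow> complex" where "ip x y = \<phi> (st x * y)"
definition Q :: "'a \<Rightarrow> real" where "Q x = Re (ip x x)"
abbreviation nrm where "nrm \<equiv> phinorm st \<phi>"

lemma ip_add_l: "ip (x + y) z = ip x z + ip y z"
  by (simp add: ip_def st_add distrib_right phi_add)
lemma ip_add_r: "ip x (y + z) = ip x y + ip x z"
  by (simp add: ip_def distrib_left phi_add)
lemma ip_diff_l: "ip (x - y) z = ip x z - ip y z"
  by (simp add: ip_def st_diff left_diff_distrib phi_diff)
lemma ip_diff_r: "ip x (y - z) = ip x y - ip x z"
  by (simp add: ip_def right_diff_distrib phi_diff)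
lemma ip_minus_l: "ip (- x) z = - ip x z"
  by (simp add: ip_def st_minus phi_minus)
lemma ip_minus_r: "ip x (- z) = - ip x z"
  by (simp add: ip_def phi_minus)
lemma ip_sm_r: "ip x (smul a y) = a * ip x y"
  by (simp add: ip_def sm_mult_r[symmetric] phi_sm)
lemma ip_sm_l: "ip (smul a x) y = cnj a * ip x y"
  by (simp add: ip_def st_sm sm_mult_l[symmetric] phi_sm)
lemma ip_zero_l[simp]: "ip 0 x = 0" by (simp add: ip_def)
lemma ip_zero_r[simp]: "ip x 0 = 0" by (simp add: ip_def)
lemma ip_one_l: "ip 1 x = \<phi> x" by (simp add: ip_def)

lemma ip_self_im: "Im (ip x x) = 0" by (simp add: ip_def phi_pos_im)
lemma Q_nonneg: "Q x \<ge> 0" by (simp add: Q_def ip_def phi_pos_re)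
lemma ip_self: "ip x x = of_real (Q x)"
  using ip_self_im by (simp add: Q_def complex_eq_iff)

lemma ip_herm: "ip y x = cnj (ip x y)"
proof -
  have 1: "Im (ip x y) + Im (ip y x) = 0"
    using ip_self_im[of "x + y"] ip_self_im[of x] ip_self_im[of y]
    by (simp add: ip_add_l ip_add_r)
  have "Im (ip (x + smul \<i> y) (x + smul \<i> y)) = 0" by (rule ip_self_im)
  hence 2: "Re (ip x y) - Re (ip y x) = 0"
    using ip_self_im[of x] ip_self_im[of y]
    by (simp add: ip_add_l ip_add_r ip_sm_l ip_sm_r)
  show ?thesis using 1 2 by (simp add: complex_eq_iff)
qed

lemma Q_add: "Q (x + y) = Q x + 2 * Re (ip x y) + Q y"
  using ip_herm[of x y] by (simp add: Q_def ip_add_l ip_add_r)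
lemma Q_diff: "Q (x - y) = Q x - 2 * Re (ip x y) + Q y"
  using ip_herm[of x y] by (simp add: Q_def ip_diff_l ip_diff_r)
lemma Q_sm: "Q (smul c x) = (cmod c)^2 * Q x"
proof -
  have "ip (smul c x) (smul c x) = (c * cnj c) * ip x x"
    by (simp add: ip_sm_l ip_sm_r mult_ac)
  thus ?thesis by (simp add: Q_def complex_mult_cnj cmod_power2)
qed
lemma Q_minus: "Q (- x) = Q x"
  by (simp add: Q_def ip_minus_l ip_minus_r)

lemma ip_x_one: "ip x 1 = cnj (\<phi> x)"
  using ip_herm[of 1 x] by (simp add: ip_one_l)
lemma phi_st: "\<phi> (st x) = cnj (\<phi> x)"
  using ip_x_one[of x] by (simp add: ip_def)

lemma nrm_def: "nrm x = sqrt (Q x)"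
  by (simp add: phinorm_def Q_def ip_def)


lemma quad_le:
  fixes a b q :: real
  assumes q: "q \<ge> 0" and b: "b \<ge> 0" and h: "\<And>t. 0 \<le> a - 2*t*q + t^2*q*b"
  shows "q \<le> a * b"
proof (cases "q = 0")
  case True
  have "a \<ge> 0" using h[of 0] by simp
  thus ?thesis using True b by simp
next
  case False
  hence qp: "q > 0" using q by simp
  show ?thesis
  proof (cases "b = 0")
    case True
    have "0 \<le> a - 2*((a+1)/(2*q))*q" using h[of "(a+1)/(2*q)"] True by simp
    also have "\<dots> = -1" using qp by (simp add: field_simps)
    finally show ?thesis by simp
  next
    case False
    hence bp: "b > 0" using b by simp
    have "0 \<le> a - 2*(1/b)*q + (1/b)^2*q*b" by (rule h)
    also have "\<dots> = a - q / b" using bp by (simp add: field_simps power2_eq_square)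
    finally have "q / b \<le> a" by simp
    thus ?thesis using bp by (simp add: field_simps mult.commute)
  qed
qed

lemma cnj_mult_self: "cnj c * c = of_real ((cmod c)^2)"
  by (simp add: mult.commute complex_mult_cnj cmod_power2)

lemma CS_sq: "(cmod (ip x y))^2 \<le> Q x * Q y"
proof -
  define c where "c = ip x y"
  have "0 \<le> Q x - 2*t*(cmod c)^2 + t^2*(cmod c)^2*Q y" for t :: real
  proof -
    define \<beta> where "\<beta> = of_real t * cnj c"
    have "Q (x - smul \<beta> y) = Q x - 2 * Re (ip x (smul \<beta> y)) + Q (smul \<beta> y)"
      by (rule Q_diff)
    also have "Re (ip x (smul \<beta> y)) = t * (cmod c)^2"
      by (simp add: ip_sm_r \<beta>_def c_def[symmetric] mult.assoc cnj_mult_self)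
    also have "Q (smul \<beta> y) = t^2 * (cmod c)^2 * Q y"
      by (simp add: Q_sm \<beta>_def norm_mult power_mult_distrib)
    finally show ?thesis using Q_nonneg[of "x - smul \<beta> y"] by (simp add: mult.assoc)
  qed
  hence "(cmod c)^2 \<le> Q x * Q y"
    by (intro quad_le) (auto simp: Q_nonneg)
  thus ?thesis by (simp add: c_def)
qed

lemma nrm_nonneg: "nrm x \<ge> 0" using Q_nonneg[of x] by (simp add: nrm_def)
lemma nrm_sq: "(nrm x)^2 = Q x" using Q_nonneg[of x] by (simp add: nrm_def)

lemma CS: "cmod (ip x y) \<le> nrm x * nrm y"
proof -
  have "cmod (ip x y) \<le> sqrt (Q x * Q y)" by (rule real_le_rsqrt) (rule CS_sq)
  thus ?thesis by (simp add: nrm_def real_sqrt_mult)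
qed

lemma nrm_tri: "nrm (x + y) \<le> nrm x + nrm y"
proof -
  have "Re (ip x y) \<le> nrm x * nrm y" using complex_Re_le_cmod[of "ip x y"] CS[of x y] by linarith
  hence "Q (x + y) \<le> (nrm x + nrm y)^2"
    by (simp add: Q_add power2_sum nrm_sq)
  thus ?thesis unfolding nrm_def[of "x+y"]
    by (intro real_le_lsqrt) (auto simp: nrm_nonneg add_nonneg_nonneg)
qed

lemma nrm_minus: "nrm (- x) = nrm x" by (simp add: nrm_def Q_minus)
lemma nrm_commute: "nrm (x - y) = nrm (y - x)"
  using nrm_minus[of "x - y"] by simp
lemma nrm_tri3: "nrm (x - z) \<le> nrm (x - y) + nrm (y - z)"
  using nrm_tri[of "x - y" "y - z"] by simp
lemma nrm_diff_tri: "nrm (x - y) \<le> nrm x + nrm y"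
  using nrm_tri[of x "- y"] nrm_minus[of y] by simp
lemma nrm_sm: "nrm (smul c x) = cmod c * nrm x"
  by (simp add: nrm_def Q_sm real_sqrt_mult)
lemma Q_one: "Q 1 = 1" by (simp add: Q_def ip_one_l phi_one)
lemma nrm_one: "nrm 1 = 1" by (simp add: nrm_def Q_one)
lemma phi_le: "cmod (\<phi> x) \<le> nrm x"
  using CS[of 1 x] by (simp add: ip_one_l nrm_one)

lemma Q_tau: "Q (\<tau> x) \<le> Q x" using tau_contr by (simp add: Q_def ip_def)
lemma nrm_tau: "nrm (\<tau> x) \<le> nrm x" by (simp add: nrm_def Q_tau)
lemma nrm_taup: "nrm ((\<tau>^^k) x) \<le> nrm x"
  by (induct k) (auto intro: order_trans[OF nrm_tau])

lemma nrm_taup_diff: "nrm ((\<tau>^^k) x - x) \<le> real k * nrm (\<tau> x - x)"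
proof (induct k)
  case 0 thus ?case by (simp add: nrm_def Q_def)
next
  case (Suc k)
  have eq: "(\<tau>^^Suc k) x - x = (\<tau>^^k) (\<tau> x - x) + ((\<tau>^^k) x - x)"
    by (simp add: taup_diff funpow_swap1)
  have "nrm ((\<tau>^^Suc k) x - x) \<le> nrm ((\<tau>^^k) (\<tau> x - x)) + nrm ((\<tau>^^k) x - x)"
    unfolding eq by (rule nrm_tri)
  also have "\<dots> \<le> nrm (\<tau> x - x) + real k * nrm (\<tau> x - x)"
    using nrm_taup Suc by (intro add_mono) auto
  finally show ?case by (simp add: algebra_simps)
qed

lemma lin_zero:
  fixes a K :: real
  assumes K: "K \<ge> 0" and h: "\<And>t. t * a \<le> t^2 * K"
  shows "a = 0"
proof -
  have "(K+1)^2 * ((a/(K+1)) * a) \<le> (K+1)^2 * ((a/(K+1))^2 * K)"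
    by (rule mult_left_mono[OF h]) simp
  moreover have "(K+1)^2 * ((a/(K+1)) * a) = a^2 * (K+1)" using K
    by (simp add: field_simps power2_eq_square)
  moreover have "(K+1)^2 * ((a/(K+1))^2 * K) = a^2 * K" using K
    by (simp add: power_divide)
  ultimately have "a^2 * (K+1) \<le> a^2 * K" by simp
  hence "a^2 \<le> 0" by (simp add: algebra_simps)
  thus ?thesis by simp
qed

lemma Q_one_sm: "Q (1 + smul (of_real t) z) = 1 + 2 * t * Re (\<phi> z) + t^2 * Q z"
  by (simp add: Q_add Q_one ip_sm_r ip_one_l Q_sm)

lemma phi_tau_re: "Re (\<phi> (\<tau> w)) = Re (\<phi> w)"
proof -
  have "t * (2 * (Re (\<phi> (\<tau> w)) - Re (\<phi> w))) \<le> t^2 * (Q w - Q (\<tau> w))" for t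
  proof -
    have "Q (\<tau> (1 + smul (of_real t) w)) \<le> Q (1 + smul (of_real t) w)" by (rule Q_tau)
    thus ?thesis by (simp add: tau_add tau_sm tau_one Q_one_sm algebra_simps)
  qed
  hence "2 * (Re (\<phi> (\<tau> w)) - Re (\<phi> w)) = 0"
    by (intro lin_zero[of "Q w - Q (\<tau> w)"]) (auto simp: Q_tau)
  thus ?thesis by simp
qed

lemma phi_tau: "\<phi> (\<tau> w) = \<phi> w"
proof -
  have "Re (\<phi> (\<tau> (smul (- \<i>) w))) = Re (\<phi> (smul (- \<i>) w))" by (rule phi_tau_re)
  hence "Im (\<phi> (\<tau> w)) = Im (\<phi> w)" by (simp add: tau_sm phi_sm)
  thus ?thesis using phi_tau_re[of w] by (simp add: complex_eq_iff)
qed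

lemma phi_taup: "\<phi> ((\<tau>^^k) w) = \<phi> w"
  by (induct k) (auto simp: phi_tau)


definition avg :: "'a \<Rightarrow> 'a \<Rightarrow> nat \<Rightarrow> complex" where
  "avg y b n = (\<Sum>k<n. ip y ((\<tau>^^k) b)) / of_nat n"
definition Hp :: "'a \<Rightarrow> 'a \<Rightarrow> bool" where
  "Hp y b \<longleftrightarrow> avg y b \<longlonglongrightarrow> cnj (\<phi> y) * \<phi> b"

lemma avg_bound: "cmod (avg y b n) \<le> nrm y * nrm b"
proof (cases "n = 0")
  case True thus ?thesis by (simp add: avg_def nrm_nonneg)
next
  case False
  have "cmod (\<Sum>k<n. ip y ((\<tau>^^k) b)) \<le> (\<Sum>k<n. cmod (ip y ((\<tau>^^k) b)))"
    by (rule norm_sum)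
  also have "\<dots> \<le> (\<Sum>k<(n::nat). nrm y * nrm b)"
  proof (rule sum_mono)
    fix k
    have "cmod (ip y ((\<tau>^^k) b)) \<le> nrm y * nrm ((\<tau>^^k) b)" by (rule CS)
    also have "\<dots> \<le> nrm y * nrm b" by (rule mult_left_mono[OF nrm_taup nrm_nonneg])
    finally show "cmod (ip y ((\<tau>^^k) b)) \<le> nrm y * nrm b" .
  qed
  also have "\<dots> = real n * (nrm y * nrm b)" by simp
  finally show ?thesis using False by (simp add: avg_def norm_divide field_simps)
qed

lemma avg_diff_l: "avg (y - y') b n = avg y b n - avg y' b n"
  by (simp add: avg_def ip_diff_l sum_subtractf diff_divide_distrib)
lemma avg_diff_r: "avg y (b - b') n = avg y b n - avg y b' n"
  by (simp add: avg_def ip_diff_r taup_diff sum_subtractf diff_divide_distrib)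
lemma avg_add_l: "avg (y + y') b n = avg y b n + avg y' b n"
  by (simp add: avg_def ip_add_l sum.distrib add_divide_distrib)
lemma avg_add_r: "avg y (b + b') n = avg y b n + avg y b' n"
  by (simp add: avg_def ip_add_r taup_add sum.distrib add_divide_distrib)
lemma avg_sm_l: "avg (smul c y) b n = cnj c * avg y b n"
  by (simp add: avg_def ip_sm_l sum_distrib_left[symmetric])
lemma avg_sm_r: "avg y (smul c b) n = c * avg y b n"
  by (simp add: avg_def ip_sm_r taup_sm sum_distrib_left[symmetric])

lemma Hp_add_l: "Hp y b \<Longrightarrow> Hp y' b \<Longrightarrow> Hp (y + y') b"
  unfolding Hp_def avg_add_l[abs_def] by (drule (1) tendsto_add) (simp add: phi_add distrib_right)
lemma Hp_add_r: "Hp y b \<Longrightarrow> Hp y b' \<Longrightarrow> Hp y (b + b')"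
  unfolding Hp_def avg_add_r[abs_def] by (drule (1) tendsto_add) (simp add: phi_add distrib_left)
lemma Hp_sm_l: "Hp y b \<Longrightarrow> Hp (smul c y) b"
  unfolding Hp_def avg_sm_l[abs_def] by (drule tendsto_mult_left[where c="cnj c"]) (simp add: phi_sm mult.assoc)
lemma Hp_sm_r: "Hp y b \<Longrightarrow> Hp y (smul c b)"
  unfolding Hp_def avg_sm_r[abs_def] by (drule tendsto_mult_left[where c="c"]) (simp add: phi_sm mult_ac)
lemma Hp_zero_l: "Hp 0 b" by (simp add: Hp_def avg_def[abs_def])
lemma Hp_zero_r: "Hp y 0" by (simp add: Hp_def avg_def[abs_def] taup_zero)

lemma Hp_span_l:
  assumes "\<forall>s\<in>S. Hp s b" "y \<in> lin_span smul S" shows "Hp y b"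
proof -
  obtain F c where F: "finite F" "F \<subseteq> S" "y = (\<Sum>s\<in>F. smul (c s) s)"
    using assms(2) unfolding lin_span_def by blast
  have "Hp (\<Sum>s\<in>F. smul (c s) s) b" using F(1,2)
  proof (induct F rule: finite_induct)
    case empty thus ?case by (simp add: Hp_zero_l)
  next
    case (insert x F) thus ?case using assms(1) by (simp add: Hp_add_l Hp_sm_l)
  qed
  thus ?thesis using F(3) by simp
qed

lemma Hp_span_r:
  assumes "\<forall>s\<in>T. Hp y s" "b \<in> lin_span smul T" shows "Hp y b"
proof -
  obtain F c where F: "finite F" "F \<subseteq> T" "b = (\<Sum>s\<in>F. smul (c s) s)"
    using assms(2) unfolding lin_span_def by blast
  have "Hp y (\<Sum>s\<in>F. smul (c s) s)" using F(1,2)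
  proof (induct F rule: finite_induct)
    case empty thus ?case by (simp add: Hp_zero_r)
  next
    case (insert x F) thus ?case using assms(1) by (simp add: Hp_add_r Hp_sm_r)
  qed
  thus ?thesis using F(3) by simp
qed

end

lemma approx_lim:
  fixes X :: "nat \<Rightarrow> complex"
  assumes "\<And>\<epsilon>. \<epsilon> > 0 \<Longrightarrow> \<exists>Y M. Y \<longlonglongrightarrow> M \<and> (\<forall>n. cmod (X n - Y n) \<le> \<epsilon>) \<and> cmod (L - M) \<le> \<epsilon>"
  shows "X \<longlonglongrightarrow> L"
proof (rule LIMSEQ_I)
  fix r :: real assume r: "r > 0"
  obtain Y M where Y: "Y \<longlonglongrightarrow> M" "\<forall>n. cmod (X n - Y n) \<le> r/3" "cmod (L - M) \<le> r/3"
    using assms[of "r/3"] r by auto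
  obtain N where N: "\<forall>n\<ge>N. cmod (Y n - M) < r/3"
    using LIMSEQ_D[OF Y(1), of "r/3"] r by auto
  have "cmod (X n - L) < r" if "n \<ge> N" for n
  proof -
    have "X n - L = (X n - Y n) + (Y n - M) + (M - L)" by simp
    hence "cmod (X n - L) \<le> cmod (X n - Y n) + cmod (Y n - M) + cmod (M - L)"
      by (metis norm_triangle_ineq order_trans add_right_mono)
    also have "cmod (M - L) = cmod (L - M)" by (rule norm_minus_commute)
    finally show ?thesis using Y(2)[rule_format, of n] Y(3) N[rule_format, OF that] by linarith
  qed
  thus "\<exists>no. \<forall>n\<ge>no. cmod (X n - L) < r" by blast
qed

context sds begin

lemma Hp_dense_l:
  assumes tot: "phi_total smul st \<phi> S" and h: "\<forall>y\<in>lin_span smul S. Hp y b"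
  shows "Hp y b"
  unfolding Hp_def
proof (rule approx_lim)
  fix \<epsilon> :: real assume e: "\<epsilon> > 0"
  define \<delta> where "\<delta> = \<epsilon> / (nrm b + 1)"
  have dp: "\<delta> > 0" using e nrm_nonneg[of b] by (simp add: \<delta>_def)
  obtain y' where y': "y' \<in> lin_span smul S" "nrm (y - y') < \<delta>"
    using tot dp unfolding phi_total_def by blast
  have bd: "nrm (y - y') * nrm b \<le> \<epsilon>"
  proof -
    have "nrm (y - y') * nrm b \<le> \<delta> * nrm b" using y'(2) nrm_nonneg[of b] by (simp add: mult_right_mono)
    also have "\<dots> \<le> \<delta> * (nrm b + 1)" using dp by simp
    also have "\<dots> = \<epsilon>" using nrm_nonneg[of b] by (simp add: \<delta>_def)
    finally show ?thesis .
  qed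
  show "\<exists>Y M. Y \<longlonglongrightarrow> M \<and> (\<forall>n. cmod (avg y b n - Y n) \<le> \<epsilon>) \<and> cmod (cnj (\<phi> y) * \<phi> b - M) \<le> \<epsilon>"
  proof (intro exI conjI allI)
    show "avg y' b \<longlonglongrightarrow> cnj (\<phi> y') * \<phi> b" using h y'(1) by (simp add: Hp_def)
    fix n
    show "cmod (avg y b n - avg y' b n) \<le> \<epsilon>"
      using avg_bound[of "y - y'" b n] bd by (simp add: avg_diff_l)
  next
    have "cnj (\<phi> y) * \<phi> b - cnj (\<phi> y') * \<phi> b = cnj (\<phi> (y - y')) * \<phi> b"
      by (simp add: phi_diff algebra_simps)
    also have "cmod \<dots> \<le> nrm (y - y') * nrm b"
      by (simp add: norm_mult mult_mono phi_le nrm_nonneg)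
    finally show "cmod (cnj (\<phi> y) * \<phi> b - cnj (\<phi> y') * \<phi> b) \<le> \<epsilon>" using bd by simp
  qed
qed

lemma Hp_dense_r:
  assumes tot: "phi_total smul st \<phi> T" and h: "\<forall>b\<in>lin_span smul T. Hp y b"
  shows "Hp y b"
  unfolding Hp_def
proof (rule approx_lim)
  fix \<epsilon> :: real assume e: "\<epsilon> > 0"
  define \<delta> where "\<delta> = \<epsilon> / (nrm y + 1)"
  have dp: "\<delta> > 0" using e nrm_nonneg[of y] by (simp add: \<delta>_def)
  obtain b' where b': "b' \<in> lin_span smul T" "nrm (b - b') < \<delta>"
    using tot dp unfolding phi_total_def by blast
  have bd: "nrm y * nrm (b - b') \<le> \<epsilon>"
  proof -
    have "nrm y * nrm (b - b') \<le> nrm y * \<delta>" using b'(2) nrm_nonneg[of y] by (simp add: mult_left_mono)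
    also have "\<dots> \<le> (nrm y + 1) * \<delta>" using dp by simp
    also have "\<dots> = \<epsilon>" using nrm_nonneg[of y] by (simp add: \<delta>_def)
    finally show ?thesis .
  qed
  show "\<exists>Y M. Y \<longlonglongrightarrow> M \<and> (\<forall>n. cmod (avg y b n - Y n) \<le> \<epsilon>) \<and> cmod (cnj (\<phi> y) * \<phi> b - M) \<le> \<epsilon>"
  proof (intro exI conjI allI)
    show "avg y b' \<longlonglongrightarrow> cnj (\<phi> y) * \<phi> b'" using h b'(1) by (simp add: Hp_def)
    fix n
    show "cmod (avg y b n - avg y b' n) \<le> \<epsilon>"
      using avg_bound[of y "b - b'" n] bd by (simp add: avg_diff_r)
  next
    have "cnj (\<phi> y) * \<phi> b - cnj (\<phi> y) * \<phi> b' = cnj (\<phi> y) * \<phi> (b - b')"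
      by (simp add: phi_diff algebra_simps)
    also have "cmod \<dots> \<le> nrm y * nrm (b - b')"
      by (simp add: norm_mult mult_mono phi_le nrm_nonneg)
    finally show "cmod (cnj (\<phi> y) * \<phi> b - cnj (\<phi> y) * \<phi> b') \<le> \<epsilon>" using bd by simp
  qed
qed

lemma Hp_all:
  assumes "phi_total smul st \<phi> S" "phi_total smul st \<phi> T" "\<forall>s\<in>S. \<forall>b\<in>T. Hp s b"
  shows "Hp y b"
proof -
  have "Hp y' b'" if "y' \<in> lin_span smul S" "b' \<in> lin_span smul T" for y' b'
    using Hp_span_r[OF _ that(2)] Hp_span_l[OF _ that(1)] assms(3) by blast
  hence "Hp y b'" if "b' \<in> lin_span smul T" for b'
    using Hp_dense_l[OF assms(1)] that by blast
  thus ?thesis using Hp_dense_r[OF assms(2)] by blast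
qed


lemma nrm_tri_3: "nrm (a + b + c) \<le> nrm a + nrm b + nrm c"
  using nrm_tri[of "a + b" c] nrm_tri[of a b] by linarith

lemma ergodic_of_Hp:
  assumes H: "\<And>y b. Hp y b"
  shows "ergodic smul st \<phi> \<tau>"
  unfolding ergodic_def
proof (intro allI impI)
  fix X assume a: "(\<lambda>n. nrm (\<tau> (X n) - X n)) \<longlonglongrightarrow> 0 \<and> phi_cauchy st \<phi> X"
  hence g: "(\<lambda>n. nrm (\<tau> (X n) - X n)) \<longlonglongrightarrow> 0"
    and c: "\<And>\<epsilon>. \<epsilon> > 0 \<Longrightarrow> \<exists>N. \<forall>m n. m > N \<and> n > N \<longrightarrow> nrm (X m - X n) \<le> \<epsilon>"
    by (auto simp: phi_cauchy_def)
  have key: "nrm (X m - smul (\<phi> (X m)) 1) \<le> 2 * \<epsilon>"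
    if e: "\<epsilon> > 0" and N: "\<forall>m n. m > N \<and> n > N \<longrightarrow> nrm (X m - X n) \<le> \<epsilon>" and m: "m > N"
    for \<epsilon> N m
  proof -
    have tk: "nrm ((\<tau>^^k) (X m) - X m) \<le> 2 * \<epsilon>" for k
    proof -
      have b: "2 * \<epsilon> \<le> 2 * \<epsilon> + real k * nrm (\<tau> (X n) - X n)" if n: "n > N" for n
        using nrm_nonneg by simp
      have "nrm ((\<tau>^^k) (X m) - X m) \<le> 2 * \<epsilon> + real k * nrm (\<tau> (X n) - X n)" if n: "n > N" for n
      proof -
        have eq: "(\<tau>^^k) (X m) - X m = (\<tau>^^k) (X m - X n) + ((\<tau>^^k) (X n) - X n) + (X n - X m)"
          by (simp add: taup_diff)
        have "nrm ((\<tau>^^k) (X m) - X m) \<le> nrm ((\<tau>^^k) (X m - X n)) + nrm ((\<tau>^^k) (X n) - X n) + nrm (X n - X m)"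
          unfolding eq by (rule nrm_tri_3)
        moreover have "nrm ((\<tau>^^k) (X m - X n)) \<le> \<epsilon>"
          using nrm_taup[of k "X m - X n"] N m n by force
        moreover have "nrm (X n - X m) \<le> \<epsilon>" using N m n by force
        moreover have "nrm ((\<tau>^^k) (X n) - X n) \<le> real k * nrm (\<tau> (X n) - X n)"
          by (rule nrm_taup_diff)
        ultimately show ?thesis by linarith
      qed
      moreover have "(\<lambda>n. 2 * \<epsilon> + real k * nrm (\<tau> (X n) - X n)) \<longlonglongrightarrow> 2 * \<epsilon> + real k * 0"
        by (intro tendsto_intros g)
      ultimately show ?thesis
        by (intro LIMSEQ_le_const[of "\<lambda>n. 2 * \<epsilon> + real k * nrm (\<tau> (X n) - X n)"]) (auto intro!: exI[of _ "Suc N"])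
    qed
    define y where "y = X m - smul (\<phi> (X m)) 1"
    have phy: "\<phi> y = 0" by (simp add: y_def phi_diff phi_sm phi_one)
    have Hy: "avg y (X m) \<longlonglongrightarrow> 0" using H[of y "X m"] phy by (simp add: Hp_def)
    have bnd: "cmod (avg y (X m) n - ip y (X m)) \<le> nrm y * (2 * \<epsilon>)" if n1: "n \<ge> 1" for n
    proof -
      have "avg y (X m) n - ip y (X m) = (\<Sum>k<n. ip y ((\<tau>^^k) (X m) - X m)) / of_nat n"
        using n1 by (simp add: avg_def ip_diff_r sum_subtractf diff_divide_distrib)
      also have "cmod \<dots> \<le> (\<Sum>k<n. cmod (ip y ((\<tau>^^k) (X m) - X m))) / real n"
        by (simp add: norm_divide norm_sum divide_right_mono)
      also have "\<dots> \<le> (\<Sum>k<n. nrm y * (2 * \<epsilon>)) / real n"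
        by (intro divide_right_mono sum_mono order_trans[OF CS] mult_left_mono tk nrm_nonneg) auto
      also have "\<dots> = nrm y * (2 * \<epsilon>)" using n1 by simp
      finally show ?thesis .
    qed
    have "(\<lambda>n. cmod (avg y (X m) n - ip y (X m))) \<longlonglongrightarrow> cmod (0 - ip y (X m))"
      by (intro tendsto_intros Hy)
    hence le: "cmod (0 - ip y (X m)) \<le> nrm y * (2 * \<epsilon>)"
      by (rule LIMSEQ_le_const2) (use bnd in auto)
    have "X m = y + smul (\<phi> (X m)) 1" by (simp add: y_def)
    hence "ip y (X m) = ip y y + \<phi> (X m) * ip y 1"
      by (metis ip_add_r ip_sm_r)
    also have "\<dots> = of_real (Q y)" by (simp add: ip_x_one phy ip_self)
    finally have "Q y \<le> nrm y * (2 * \<epsilon>)" using le Q_nonneg[of y] by simp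
    hence "nrm y * nrm y \<le> nrm y * (2 * \<epsilon>)" using nrm_sq[of y] by (simp add: power2_eq_square)
    hence "nrm y \<le> 2 * \<epsilon>"
    proof (cases "nrm y = 0")
      case True thus ?thesis using e by simp
    next
      case False
      hence "nrm y > 0" using nrm_nonneg[of y] by simp
      thus ?thesis using \<open>nrm y * nrm y \<le> nrm y * (2 * \<epsilon>)\<close> by simp
    qed
    thus ?thesis by (simp add: y_def)
  qed
  have "Cauchy (\<lambda>n. \<phi> (X n))"
  proof (rule CauchyI)
    fix e :: real assume e: "e > 0"
    obtain N where N: "\<forall>m n. m > N \<and> n > N \<longrightarrow> nrm (X m - X n) \<le> e/2" using c[of "e/2"] e by auto
    have "cmod (\<phi> (X m) - \<phi> (X n)) < e" if "m \<ge> Suc N" "n \<ge> Suc N" for m n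
    proof -
      have "cmod (\<phi> (X m) - \<phi> (X n)) \<le> nrm (X m - X n)" using phi_le[of "X m - X n"] by (simp add: phi_diff)
      also have "\<dots> \<le> e/2" using N that by auto
      finally show ?thesis using e by simp
    qed
    thus "\<exists>M. \<forall>m\<ge>M. \<forall>n\<ge>M. cmod (\<phi> (X m) - \<phi> (X n)) < e" by blast
  qed
  then obtain \<alpha> where al: "(\<lambda>n. \<phi> (X n)) \<longlonglongrightarrow> \<alpha>"
    unfolding Cauchy_convergent_iff convergent_def by blast
  show "\<exists>\<alpha>. (\<lambda>n. nrm (X n - smul \<alpha> 1)) \<longlonglongrightarrow> 0"
  proof (rule exI[of _ \<alpha>], rule LIMSEQ_I)
    fix r :: real assume r: "r > 0"
    obtain N1 where N1: "\<forall>m n. m > N1 \<and> n > N1 \<longrightarrow> nrm (X m - X n) \<le> r/4" using c[of "r/4"] r by auto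
    obtain N2 where N2: "\<forall>n\<ge>N2. cmod (\<phi> (X n) - \<alpha>) < r/2" using LIMSEQ_D[OF al, of "r/2"] r by auto
    have "norm (nrm (X n - smul \<alpha> 1) - 0) < r" if n: "n \<ge> max (Suc N1) N2" for n
    proof -
      have eq: "X n - smul \<alpha> 1 = (X n - smul (\<phi> (X n)) 1) + smul (\<phi> (X n) - \<alpha>) 1"
        by (simp add: sm_diff_l)
      have "nrm (X n - smul \<alpha> 1) \<le> nrm (X n - smul (\<phi> (X n)) 1) + nrm (smul (\<phi> (X n) - \<alpha>) 1)"
        unfolding eq by (rule nrm_tri)
      also have "nrm (smul (\<phi> (X n) - \<alpha>) 1) = cmod (\<phi> (X n) - \<alpha>)" by (simp add: nrm_sm nrm_one)
      finally have "nrm (X n - smul \<alpha> 1) \<le> nrm (X n - smul (\<phi> (X n)) 1) + cmod (\<phi> (X n) - \<alpha>)" .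
      moreover have "nrm (X n - smul (\<phi> (X n)) 1) \<le> 2 * (r/4)"
        using key[of "r/4" N1 n] r N1 n by auto
      moreover have "cmod (\<phi> (X n) - \<alpha>) < r/2" using N2 n by auto
      ultimately show ?thesis using nrm_nonneg[of "X n - smul \<alpha> 1"] by simp
    qed
    thus "\<exists>no. \<forall>n\<ge>no. norm (nrm (X n - smul \<alpha> 1) - 0) < r" by blast
  qed
qed


lemma quad2:
  fixes C G R \<delta> :: real
  assumes C: "C > 0" and GC: "G \<le> C" and h: "\<And>t. 0 \<le> \<delta> + 2*t*R + t^2*G"
  shows "R^2 \<le> C * \<delta>"
proof -
  have h1: "0 \<le> \<delta> + 2*(-R/C)*R + (-R/C)^2*G" by (rule h)
  have e1: "2*(-R/C)*R = -2*(R^2/C)" by (simp add: power2_eq_square)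
  have e2: "(-R/C)^2*G = R^2*G/C^2" by (simp add: power_divide)
  have "R^2*G/C^2 \<le> R^2*C/C^2"
    using GC C by (intro divide_right_mono mult_left_mono) auto
  also have "R^2*C/C^2 = R^2/C" using C by (simp add: power2_eq_square)
  finally have i2: "R^2*G/C^2 \<le> R^2/C" .
  have "0 \<le> \<delta> - 2*(R^2/C) + R^2*G/C^2" using h1 e1 e2 by linarith
  hence "0 \<le> \<delta> - R^2/C" using i2 by linarith
  thus ?thesis using C by (simp add: pos_divide_le_eq mult.commute)
qed

lemma shift_eq: "B - ((w - smul t F) - \<tau> (w - smul t F)) = (B - (w - \<tau> w)) + smul t (F - \<tau> F)"
  by (simp add: tau_diff tau_sm sm_diff_r algebra_simps)

lemma Hp_of_ergodic:
  assumes erg: "ergodic smul st \<phi> \<tau>"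
  shows "(\<lambda>n. (\<Sum>k<n. \<phi> (A * (\<tau>^^k) B)) / of_nat n) \<longlonglongrightarrow> \<phi> A * \<phi> B"
proof -
  define D where "D = range (\<lambda>w. Q (B - (w - \<tau> w)))"
  define d2 where "d2 = Inf D"
  have Dne: "D \<noteq> {}" by (simp add: D_def)
  have bdd: "bdd_below D" unfolding bdd_below_def D_def by (auto intro!: exI[of _ 0] Q_nonneg)
  have dle: "d2 \<le> Q (B - (w - \<tau> w))" for w
    unfolding d2_def by (rule cInf_lower[OF _ bdd]) (simp add: D_def)
  have d0: "0 \<le> d2" unfolding d2_def by (rule cInf_greatest[OF Dne]) (auto simp: D_def Q_nonneg)
  have "\<forall>j. \<exists>w. Q (B - (w - \<tau> w)) < d2 + inverse (real (Suc j))"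
  proof
    fix j
    have "Inf D < d2 + inverse (real (Suc j))" by (simp add: d2_def)
    from cInf_lessD[OF Dne this] show "\<exists>w. Q (B - (w - \<tau> w)) < d2 + inverse (real (Suc j))"
      by (auto simp: D_def)
  qed
  then obtain W where W: "\<And>j. Q (B - (W j - \<tau> (W j))) < d2 + inverse (real (Suc j))" by metis
  define f where "f j = B - (W j - \<tau> (W j))" for j
  have Qf: "Q (f j) < d2 + inverse (real (Suc j))" for j using W by (simp add: f_def)
  have para: "Q (u - v) = 2 * Q u + 2 * Q v - Q (u + v)" for u v
    using Q_add[of u v] Q_diff[of u v] by simp
  have Qfij: "Q (f i - f j) \<le> 2 * inverse (real (Suc i)) + 2 * inverse (real (Suc j))" for i j
  proof -
    define w' where "w' = smul (1/2) (W i + W j)"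
    have ww: "w' + w' = W i + W j"
      unfolding w'_def sm_add_l[symmetric] by (simp add: sm_one)
    have t: "\<tau> (W i) + \<tau> (W j) = \<tau> w' + \<tau> w'" by (simp add: tau_add[symmetric] ww)
    define z where "z = B - (w' - \<tau> w')"
    have "f i + f j = (B + B) - (W i + W j) + (\<tau> (W i) + \<tau> (W j))" by (simp add: f_def algebra_simps)
    also have "\<dots> = (B + B) - (w' + w') + (\<tau> w' + \<tau> w')" by (simp only: ww t)
    also have "\<dots> = z + z" by (simp add: z_def algebra_simps)
    finally have fz: "f i + f j = z + z" .
    have "Q (z + z) = 4 * Q z" unfolding Q_add by (simp add: Q_def)
    moreover have "d2 \<le> Q z" unfolding z_def by (rule dle)
    ultimately show ?thesis using para[of "f i" "f j"] fz Qf[of i] Qf[of j] by simp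
  qed
  have cauchy: "phi_cauchy st \<phi> f"
    unfolding phi_cauchy_def
  proof (intro allI impI)
    fix \<epsilon> :: real assume e: "\<epsilon> > 0"
    obtain n0 :: nat where n0: "n0 > 0" "inverse (real n0) < \<epsilon>^2/4"
      using ex_inverse_of_nat_less[of "\<epsilon>^2/4"] e by auto
    have "nrm (f m - f n) \<le> \<epsilon>" if "m > n0" "n > n0" for m n
    proof -
      have im: "inverse (real (Suc m)) \<le> inverse (real n0)" using that n0 by (simp add: le_imp_inverse_le)
      have inn: "inverse (real (Suc n)) \<le> inverse (real n0)" using that n0 by (simp add: le_imp_inverse_le)
      have "Q (f m - f n) \<le> \<epsilon>^2" using Qfij[of m n] im inn n0 by linarith
      thus ?thesis unfolding nrm_def using e by (intro real_le_lsqrt) auto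
    qed
    thus "\<exists>N. \<forall>m n. N < m \<and> N < n \<longrightarrow> nrm (f m - f n) \<le> \<epsilon>" by blast
  qed
  define C where "C = 4 * (d2 + 1)"
  have Cp: "C > 0" using d0 by (simp add: C_def)
  have Rb: "Q (\<tau> (f j) - f j) \<le> 2 * sqrt (C * inverse (real (Suc j)))" for j
  proof -
    define \<delta> where "\<delta> = inverse (real (Suc j))"
    define g where "g = f j - \<tau> (f j)"
    define R where "R = Re (ip (f j) g)"
    define G where "G = Q g"
    have \<delta>1: "\<delta> \<le> 1" unfolding \<delta>_def by (simp add: inverse_le_1_iff)
    have h: "0 \<le> \<delta> + 2*t*R + t^2*G" for t
    proof -
      have "f j + smul (of_real t) g = B - ((W j - smul (of_real t) (f j)) - \<tau> (W j - smul (of_real t) (f j)))"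
        by (simp add: shift_eq f_def[symmetric] g_def)
      hence "d2 \<le> Q (f j + smul (of_real t) g)" using dle by simp
      also have "Q (f j + smul (of_real t) g) = Q (f j) + 2*t*R + t^2*G"
        by (simp add: Q_add ip_sm_r Q_sm R_def G_def)
      finally show ?thesis using Qf[of j] by (simp add: \<delta>_def)
    qed
    have "G \<le> 2 * Q (f j) + 2 * Q (\<tau> (f j))"
      using para[of "f j" "\<tau> (f j)"] Q_nonneg[of "f j + \<tau> (f j)"] by (simp add: G_def g_def)
    also have "\<dots> \<le> 4 * Q (f j)" using Q_tau[of "f j"] by simp
    also have "\<dots> \<le> C" using Qf[of j] \<delta>1 by (simp add: C_def \<delta>_def)
    finally have GC: "G \<le> C" .
    have R2: "R^2 \<le> C * \<delta>" by (rule quad2[OF Cp GC h])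
    have "Q (\<tau> (f j) - f j) = Q (\<tau> (f j)) - 2 * Re (ip (\<tau> (f j)) (f j)) + Q (f j)" by (rule Q_diff)
    also have "Re (ip (\<tau> (f j)) (f j)) = Re (ip (f j) (\<tau> (f j)))" using ip_herm[of "f j" "\<tau> (f j)"] by simp
    finally have "Q (\<tau> (f j) - f j) \<le> 2 * R"
      using Q_tau[of "f j"] by (simp add: R_def g_def ip_diff_r Q_def)
    also have "R \<le> sqrt (C * \<delta>)" using R2 by (rule real_le_rsqrt)
    finally show ?thesis by (simp add: \<delta>_def)
  qed
  have tf: "(\<lambda>j. nrm (\<tau> (f j) - f j)) \<longlonglongrightarrow> 0"
  proof (rule tendsto_sandwich[where f="\<lambda>_. 0" and h="\<lambda>j. sqrt (2 * sqrt (C * inverse (real (Suc j))))"])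
    show "\<forall>\<^sub>F n in sequentially. 0 \<le> nrm (\<tau> (f n) - f n)" by (simp add: nrm_nonneg)
    show "\<forall>\<^sub>F n in sequentially. nrm (\<tau> (f n) - f n) \<le> sqrt (2 * sqrt (C * inverse (real (Suc n))))"
      using Rb by (simp add: nrm_def real_sqrt_le_mono)
    show "((\<lambda>_. 0) \<longlongrightarrow> (0::real)) sequentially" by simp
    have "(\<lambda>j. sqrt (2 * sqrt (C * inverse (real (Suc j))))) \<longlonglongrightarrow> sqrt (2 * sqrt (C * 0))"
      by (intro tendsto_intros LIMSEQ_inverse_real_of_nat)
    thus "(\<lambda>j. sqrt (2 * sqrt (C * inverse (real (Suc j))))) \<longlonglongrightarrow> 0" by simp
  qed
  obtain \<alpha> where al: "(\<lambda>j. nrm (f j - smul \<alpha> 1)) \<longlonglongrightarrow> 0"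
    using erg tf cauchy unfolding ergodic_def by blast
  have phif: "\<phi> (f j) = \<phi> B" for j by (simp add: f_def phi_diff phi_tau)
  have "cmod (\<phi> B - \<alpha>) \<le> nrm (f j - smul \<alpha> 1)" for j
    using phi_le[of "f j - smul \<alpha> 1"] by (simp add: phi_diff phi_sm phi_one phif)
  hence "cmod (\<phi> B - \<alpha>) \<le> 0" by (intro LIMSEQ_le_const[OF al]) auto
  hence aB: "\<alpha> = \<phi> B" by simp
  define a where "a = st A"
  have ipA: "\<phi> (A * y) = ip a y" for y by (simp add: ip_def a_def st_st)
  have ia1: "ip a 1 = \<phi> A" by (simp add: ip_def a_def st_st)
  have trm: "ip a ((\<tau>^^k) B) = ip a ((\<tau>^^k) (f j - smul \<alpha> 1)) + \<alpha> * \<phi> A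
      + (ip a ((\<tau>^^k) (W j)) - ip a ((\<tau>^^Suc k) (W j)))" for k j
  proof -
    have Bf: "B = f j + (W j - \<tau> (W j))" by (simp add: f_def)
    have "(\<tau>^^k) B = (\<tau>^^k) (f j - smul \<alpha> 1) + smul \<alpha> 1 + ((\<tau>^^k) (W j) - (\<tau>^^Suc k) (W j))"
      by (subst Bf) (simp add: taup_add taup_diff taup_sm taup_one funpow_swap1)
    thus ?thesis by (simp add: ip_add_r ip_diff_r ip_sm_r ia1)
  qed
  have decomp: "(\<Sum>k<n. ip a ((\<tau>^^k) B)) = (\<Sum>k<n. ip a ((\<tau>^^k) (f j - smul \<alpha> 1)))
      + of_nat n * (\<alpha> * \<phi> A) + (ip a (W j) - ip a ((\<tau>^^n) (W j)))" for n j
    unfolding trm[where j=j] sum.distrib using sum_lessThan_telescope'[where f="\<lambda>k. ip a ((\<tau>^^k) (W j))" and m=n] by simp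
  show ?thesis
    unfolding ipA aB[symmetric]
  proof (rule LIMSEQ_I)
    fix r :: real assume r: "r > 0"
    define K where "K = nrm a + 1"
    have Kp: "K > 0" by (simp add: K_def add_nonneg_pos nrm_nonneg)
    obtain j where j: "nrm (f j - smul \<alpha> 1) < r / (2 * K)"
      using LIMSEQ_D[OF al, of "r / (2*K)"] r Kp by (auto simp: nrm_nonneg)
    define e where "e = nrm (f j - smul \<alpha> 1)"
    have ae: "nrm a * e < r / 2"
    proof -
      have "nrm a * e \<le> K * e" unfolding K_def e_def by (rule mult_right_mono) (auto simp: nrm_nonneg)
      also have "\<dots> < K * (r / (2 * K))" unfolding e_def by (rule mult_strict_left_mono[OF _ Kp]) (use j in simp)
      also have "\<dots> = r / 2" using Kp by simp
      finally show ?thesis .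
    qed
    define c where "c = 2 * nrm a * nrm (W j)"
    obtain N :: nat where N: "2 * c / r < real N" using reals_Archimedean2 by blast
    have "cmod ((\<Sum>k<n. ip a ((\<tau>^^k) B)) / of_nat n - \<alpha> * \<phi> A) < r" if n: "n \<ge> max 1 N" for n
    proof -
      have n0: "real n > 0" using n by simp
      have "(\<Sum>k<n. ip a ((\<tau>^^k) B)) / of_nat n - \<alpha> * \<phi> A
          = ((\<Sum>k<n. ip a ((\<tau>^^k) (f j - smul \<alpha> 1))) + (ip a (W j) - ip a ((\<tau>^^n) (W j)))) / of_nat n"
        using n0 unfolding decomp[of n j] by (simp add: field_simps)
      also have "cmod \<dots> \<le> (real n * (nrm a * e) + c) / real n"
      proof -
        have "cmod (\<Sum>k<n. ip a ((\<tau>^^k) (f j - smul \<alpha> 1))) \<le> (\<Sum>k<n. nrm a * e)"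
          by (intro order_trans[OF norm_sum] sum_mono order_trans[OF CS] mult_left_mono nrm_taup nrm_nonneg)
             (simp add: e_def nrm_taup)
        moreover have "cmod (ip a (W j) - ip a ((\<tau>^^n) (W j))) \<le> c"
        proof -
          have "cmod (ip a (W j) - ip a ((\<tau>^^n) (W j))) \<le> cmod (ip a (W j)) + cmod (ip a ((\<tau>^^n) (W j)))"
            by (rule norm_triangle_ineq4)
          also have "\<dots> \<le> nrm a * nrm (W j) + nrm a * nrm (W j)"
            by (intro add_mono CS order_trans[OF CS] mult_left_mono nrm_taup nrm_nonneg)
          finally show ?thesis by (simp add: c_def)
        qed
        ultimately have "cmod ((\<Sum>k<n. ip a ((\<tau>^^k) (f j - smul \<alpha> 1))) + (ip a (W j) - ip a ((\<tau>^^n) (W j)))) \<le> real n * (nrm a * e) + c"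
          using norm_triangle_ineq[of "\<Sum>k<n. ip a ((\<tau>^^k) (f j - smul \<alpha> 1))" "ip a (W j) - ip a ((\<tau>^^n) (W j))"]
          by simp
        thus ?thesis using n0 by (simp add: norm_divide divide_right_mono)
      qed
      also have "\<dots> = nrm a * e + c / real n" using n0 by (simp add: field_simps)
      also have "c / real n < r / 2"
      proof -
        have "2 * c / r < real n" using N n by linarith
        hence "2 * c < r * real n" using r by (simp add: divide_less_eq mult.commute)
        thus ?thesis using n0 r by (simp add: divide_less_eq field_simps)
      qed
      finally show ?thesis using ae by simp
    qed
    hence "\<forall>n\<ge>max 1 N. cmod ((\<Sum>k<n. ip a ((\<tau>^^k) B)) / of_nat n - \<phi> A * \<alpha>) < r"
      by (simp add: mult.commute)
    thus "\<exists>no. \<forall>n\<ge>no. cmod ((\<Sum>k<n. ip a ((\<tau>^^k) B)) / of_nat n - \<phi> A * \<alpha>) < r" by blast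
  qed
qed

end

theorem proposition4p6:
  fixes smul :: "complex \<Rightarrow> 'a::ring_1 \<Rightarrow> 'a"
    and st :: "'a \<Rightarrow> 'a" and \<phi> :: "'a \<Rightarrow> complex" and \<tau> :: "'a \<Rightarrow> 'a"
    and S T :: "'a set"
  assumes "star_dynamical_system smul st \<phi> \<tau>"
    and "phi_total smul st \<phi> S"
    and "phi_total smul st \<phi> T"
  shows "(ergodic smul st \<phi> \<tau> \<longrightarrow>
            (\<forall>A B. (\<lambda>n. (\<Sum>k<n. \<phi> (A * (\<tau> ^^ k) B)) / of_nat n) \<longlonglongrightarrow> \<phi> A * \<phi> B))
       \<and> ((\<forall>A\<in>st ` S. \<forall>B\<in>T. (\<lambda>n. (\<Sum>k<n. \<phi> (A * (\<tau> ^^ k) B)) / of_nat n) \<longlonglongrightarrow> \<phi> A * \<phi> B)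
            \<longrightarrow> ergodic smul st \<phi> \<tau>)"
proof -
  interpret sds smul st \<phi> \<tau> by (rule sds.intro) (rule assms(1))
  show ?thesis
  proof (intro conjI impI allI)
    fix A B assume "ergodic smul st \<phi> \<tau>"
    thus "(\<lambda>n. (\<Sum>k<n. \<phi> (A * (\<tau> ^^ k) B)) / of_nat n) \<longlonglongrightarrow> \<phi> A * \<phi> B"
      by (rule Hp_of_ergodic)
  next
    assume h: "\<forall>A\<in>st ` S. \<forall>B\<in>T. (\<lambda>n. (\<Sum>k<n. \<phi> (A * (\<tau> ^^ k) B)) / of_nat n) \<longlonglongrightarrow> \<phi> A * \<phi> B"
    have "\<forall>s\<in>S. \<forall>b\<in>T. Hp s b"
      using h by (auto simp: Hp_def avg_def[abs_def] ip_def phi_st)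
    thus "ergodic smul st \<phi> \<tau>"
      by (intro ergodic_of_Hp Hp_all[OF assms(2,3)])
  qed
qed

end
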